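(* Let $\mathbb{K}$ be a field of characteristic zero, let $a_1,\dots,a_k\in\mathbb{K}$, and let $(\alpha_j,\beta_j)$, $1\le j\le k$, be pairs of nonnegative integers with $\alpha_1\le\dots\le\alpha_k$. Suppose $1\le\ell<k$ is the smallest index such that $\alpha_{\ell+1}>\alpha_1+\binom{\ell}{2}$, and let \[Q=\sum_{j=1}^\ell a_jX^{\alpha_j}Y^{\beta_j},\qquad R=\sum_{j=\ell+1}^k a_jX^{\alpha_j}Y^{\beta_j},\qquad P=Q+R.\] Then for every $F=uX+vY+w$ with $u,v,w\in\mathbb{K}$ and $uvw\neq0$, \[\operatorname{mult}_F(P)=\min\bigl(\operatorname{mult}_F(Q),\operatorname{mult}_F(R)\bigr).\]
   Context: $\operatorname{mult}_F(P)$ denotes the largest integer $\mu$ such that $F^\mu$ divides $P$, with the convention $\operatorname{mult}_F(0)=+\infty$. *)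

theory Defs
  imports "HOL-Computational_Algebra.Polynomial" "HOL-Library.Extended_Nat"
begin

text \<open>Bivariate polynomials K[X,Y] are represented as K[X][Y], i.e. as
  type 'a poly poly: the outer variable is Y, the inner (coefficient) variable is X.\<close>

definition varX :: "'a::comm_ring_1 poly poly" where
  "varX = [: [:0, 1:] :]"

definition varY :: "'a::comm_ring_1 poly poly" where
  "varY = [: 0, 1 :]"

definition bimonom :: "'a::comm_ring_1 \<Rightarrow> nat \<Rightarrow> nat \<Rightarrow> 'a poly poly" where
  "bimonom a i j = monom (monom a i) j"

definition mult_F :: "'a::comm_ring_1 poly poly \<Rightarrow> 'a poly poly \<Rightarrow> enat" where
  "mult_F F P = (if P = 0 then \<infinity> else enat (GREATEST mu. F ^ mu dvd P))"

end

theory Submission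
  imports Defs "Jordan_Normal_Form.Determinant"
begin



definition wmat :: "nat \<Rightarrow> (nat \<Rightarrow> 'a::field_char_0 poly) \<Rightarrow> 'a poly mat" where
  "wmat d u = mat d d (\<lambda>(j,i). (pderiv ^^ i) (u j))"

definition wr :: "nat \<Rightarrow> (nat \<Rightarrow> 'a::field_char_0 poly) \<Rightarrow> 'a poly" where
  "wr d u = det (wmat d u)"

lemma wr_expand: "wr d u = (\<Sum>p\<in>{p. p permutes {0..<d}}. signof p * (\<Prod>j=0..<d. (pderiv ^^ (p j)) (u j)))"
  unfolding wr_def
  apply (subst det_def'[of _ d])
   apply (simp add: wmat_def)
  apply (rule sum.cong, simp)
  apply (rule arg_cong[where f="\<lambda>x. _ * x"])
  apply (rule prod.cong, simp)
  apply (simp add: wmat_def)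
  done

lemma wmat_lin:
  assumes "\<And>j. j < d \<Longrightarrow> h j = (\<Sum>k<d. Polynomial.smult (A j k) (u k))"
  shows "wmat d h = mat d d (\<lambda>(j,k). [:A j k:]) * wmat d u"
  apply (rule eq_matI)
     apply (simp_all add: wmat_def assms scalar_prod_def higher_pderiv_sum higher_pderiv_smult)
  apply (rule sum.reindex_bij_witness[where i=id and j=id])
  by auto



lemma cp_add: "[:a+b:] = [:a:] + [:b:]" by simp
lemma cp_mult: "[:(a::'a::field_char_0)*b:] = [:a:] * [:b:]" by simp

lemma const_poly_sum: "[:sum f S:] = (\<Sum>x\<in>S. [:f x:])"
proof (induction S rule: infinite_finite_induct)
  case (insert x F) then show ?case by (simp only: sum.insert[OF insert(1,2)] cp_add insert(3))
qed auto

lemma const_poly_prod: "[:prod f S:] = (\<Prod>x\<in>S. [:(f x::'a::field_char_0):])"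
proof (induction S rule: infinite_finite_induct)
  case (insert x F) then show ?case by (simp only: prod.insert[OF insert(1,2)] cp_mult insert(3))
qed auto

lemma det_const_poly: "det (mat d d (\<lambda>(j,k). [:A j k:])) = [:det (mat d d (\<lambda>(j,k). (A j k::'a::field_char_0))):]"
  apply (subst det_def'[of _ d], simp)
  apply (subst det_def'[of _ d], simp)
  apply (simp only: const_poly_sum const_poly_prod cp_mult)
  apply (rule sum.cong, simp)
  apply (rule arg_cong2[where f="(*)"])
   apply (simp add: of_int_poly)
  apply (rule prod.cong, simp)
  apply (subgoal_tac "x xa < d")
   apply simp
  by (metis atLeastLessThan_iff mem_Collect_eq permutes_in_image)

lemma wr_lin:
  assumes "\<And>j. j < d \<Longrightarrow> h j = (\<Sum>k<d. Polynomial.smult (A j k) (u k))"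
  shows "wr d h = [:det (mat d d (\<lambda>(j,k). A j k)):] * wr d u"
proof -
  have "wmat d h = mat d d (\<lambda>(j,k). [:A j k:]) * wmat d u" by (rule wmat_lin) (use assms in auto)
  then show ?thesis unfolding wr_def \<open>wmat d h = _\<close>
    by (subst det_mult[of _ d]) (auto simp: wmat_def det_const_poly)
qed


lemma aux_id: "(q::'a::field_char_0 poly)^(Suc k)*a + s*(Polynomial.smult c (q^k) * b) = q^k*(q*a + Polynomial.smult c (s*b))"
  by (simp add: algebra_simps)

lemma pderiv_dvd_step:
  fixes f :: "'a::field_char_0 poly"
  assumes "[:-p,1:]^m dvd f" shows "[:-p,1:]^(m-1) dvd pderiv f"
proof (cases m)
  case 0 then show ?thesis by simp
next
  case (Suc k)
  from assms obtain s where s: "f = [:-p,1:]^m * s" by (auto elim: dvdE)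
  have "pderiv f = [:-p,1:]^m * pderiv s + s * (Polynomial.smult (of_nat (Suc k)) ([:-p,1:]^k) * pderiv [:-p,1:])"
    unfolding s pderiv_mult Suc pderiv_power_Suc by simp
  also have "\<dots> = [:-p,1:]^k * ([:-p,1:] * pderiv s + Polynomial.smult (of_nat (Suc k)) (s * pderiv [:-p,1:]))"
    using aux_id[of "[:-p,1:]" k] by (simp only: Suc)
  finally show ?thesis using Suc by (metis diff_Suc_1 dvd_triv_left)
qed

lemma higher_pderiv_dvd:
  fixes f :: "'a::field_char_0 poly"
  assumes "[:-p,1:]^m dvd f" shows "[:-p,1:]^(m-i) dvd (pderiv ^^ i) f"
proof (induction i)
  case 0 then show ?case using assms by (simp only: funpow_0 diff_zero)
next
  case (Suc i)
  have "[:-p,1:]^(m-i-1) dvd pderiv ((pderiv ^^ i) f)" by (rule pderiv_dvd_step[OF Suc])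
  moreover have "m - Suc i = m - i - 1" by simp
  moreover have "(pderiv ^^ Suc i) f = pderiv ((pderiv ^^ i) f)" by simp
  ultimately show ?case by metis
qed

lemma higher_pderiv_zero:
  fixes f :: "'a::field_char_0 poly"
  assumes "degree f < i" shows "(pderiv ^^ i) f = 0"
  by (rule poly_eqI) (use assms in \<open>auto simp: coeff_higher_pderiv coeff_eq_0\<close>)

lemma sum_permutes_id: "p permutes {0..<d} \<Longrightarrow> (\<Sum>j=0..<d. p j) = (\<Sum>j=0..<d. j)"
  using sum.permute[of p "{0..<d}" id] by simp

lemma sum_diff_ge: "(\<Sum>j\<in>S. (a j::nat)) - (\<Sum>j\<in>S. b j) \<le> (\<Sum>j\<in>S. a j - b j)"
proof -
  have "(\<Sum>j\<in>S. a j) \<le> (\<Sum>j\<in>S. (a j - b j) + b j)" by (rule sum_mono) simp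
  also have "\<dots> = (\<Sum>j\<in>S. a j - b j) + (\<Sum>j\<in>S. b j)" by (simp add: sum.distrib)
  finally show ?thesis by simp
qed

lemma wr_dvd:
  fixes h :: "nat \<Rightarrow> 'a::field_char_0 poly"
  assumes "\<And>j. j < d \<Longrightarrow> [:-p,1:]^(m j) dvd h j"
  shows "[:-p,1:]^((\<Sum>j=0..<d. m j) - (\<Sum>j=0..<d. j)) dvd wr d h"
  unfolding wr_expand
proof (rule dvd_sum, rule dvd_mult)
  fix q assume q0: "q \<in> {q. q permutes {0..<d}}"
  then have q: "q permutes {0..<d}" by simp
  have "[:-p,1:]^(\<Sum>j=0..<d. m j - q j) = (\<Prod>j=0..<d. [:-p,1:]^(m j - q j))" by (rule power_sum)
  also have "\<dots> dvd (\<Prod>j=0..<d. (pderiv ^^ q j) (h j))"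
    by (rule prod_dvd_prod, rule higher_pderiv_dvd, rule assms) simp
  finally have 1: "[:-p,1:]^(\<Sum>j=0..<d. m j - q j) dvd (\<Prod>j=0..<d. (pderiv ^^ q j) (h j))" .
  have "(\<Sum>j=0..<d. m j) - (\<Sum>j=0..<d. j) = (\<Sum>j=0..<d. m j) - (\<Sum>j=0..<d. q j)"
    using sum_permutes_id[OF q] by simp
  also have "\<dots> \<le> (\<Sum>j=0..<d. m j - q j)" by (rule sum_diff_ge)
  finally show "[:-p,1:]^((\<Sum>j=0..<d. m j) - (\<Sum>j=0..<d. j)) dvd (\<Prod>j=0..<d. (pderiv ^^ q j) (h j))"
    using 1 le_imp_power_dvd dvd_trans by blast
qed

lemma wr_degree:
  fixes u :: "nat \<Rightarrow> 'a::field_char_0 poly"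
  assumes nz: "wr d u \<noteq> 0"
  shows "degree (wr d u) + (\<Sum>j=0..<d. j) \<le> (\<Sum>j=0..<d. degree (u j))"
proof -
  let ?S = "\<Sum>j=0..<d. degree (u j)" and ?C = "\<Sum>j=0..<d. j"
  define t where "t q = (signof q :: 'a poly) * (\<Prod>j=0..<d. (pderiv ^^ q j) (u j))" for q
  have key: "t q = 0 \<or> (?C \<le> ?S \<and> degree (t q) \<le> ?S - ?C)" if q: "q permutes {0..<d}" for q
  proof (cases "t q = 0")
    case False
    then have nzp: "(\<Prod>j=0..<d. (pderiv ^^ q j) (u j)) \<noteq> 0" unfolding t_def by auto
    have le: "q j \<le> degree (u j)" if "j < d" for j
    proof (rule ccontr)
      assume "\<not> q j \<le> degree (u j)"
      then have "(pderiv ^^ q j) (u j) = 0" by (intro higher_pderiv_zero) simp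
      with nzp that show False by (simp add: prod_zero_iff)
    qed
    have sumq: "(\<Sum>j=0..<d. q j) = ?C" using sum_permutes_id[OF q] by simp
    have "?S = (\<Sum>j=0..<d. (degree (u j) - q j) + q j)" by (rule sum.cong) (use le in auto)
    also have "\<dots> = (\<Sum>j=0..<d. degree (u j) - q j) + ?C" by (simp add: sum.distrib sumq)
    finally have S: "?S = (\<Sum>j=0..<d. degree (u j) - q j) + ?C" .
    have "degree (t q) \<le> degree (\<Prod>j=0..<d. (pderiv ^^ q j) (u j))"
      unfolding t_def using degree_mult_le[of "signof q :: 'a poly"] by (simp add: of_int_poly)
    also have "\<dots> \<le> (\<Sum>j=0..<d. degree ((pderiv ^^ q j) (u j)))"
      using degree_prod_sum_le[of "{0..<d}"] by (simp add: o_def)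
    also have "\<dots> = (\<Sum>j=0..<d. degree (u j) - q j)" by (simp add: degree_higher_pderiv)
    finally show ?thesis using S by simp
  qed simp
  have W: "wr d u = (\<Sum>q\<in>{q. q permutes {0..<d}}. t q)" unfolding wr_expand t_def ..
  have fin: "finite {q. q permutes {0..<d}}" by (simp add: finite_permutations)
  obtain q where q: "q permutes {0..<d}" "t q \<noteq> 0"
    using nz unfolding W by (metis (mono_tags, lifting) mem_Collect_eq sum.neutral)
  with key have CS: "?C \<le> ?S" by blast
  have "degree (wr d u) \<le> ?S - ?C" unfolding W
    by (rule degree_sum_le[OF fin]) (use key in fastforce)
  with CS show ?thesis by simp
qed


definition ffc :: "nat \<Rightarrow> nat \<Rightarrow> 'a::field_char_0" where
  "ffc D i = (\<Prod>k<i. (of_nat D - of_nat k))"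

definition ffp :: "nat \<Rightarrow> 'a::field_char_0 poly" where
  "ffp i = (\<Prod>k<i. [:- of_nat k, 1:])"

lemma ffp_degree: "degree (ffp i :: 'a::field_char_0 poly) = i"
  unfolding ffp_def by (subst degree_prod_eq_sum_degree) auto

lemma ffp_lc: "coeff (ffp i :: 'a::field_char_0 poly) i = 1"
proof -
  have "lead_coeff (ffp i :: 'a poly) = 1" unfolding ffp_def by (simp add: lead_coeff_prod)
  then show ?thesis by (simp add: ffp_degree)
qed

lemma poly_ffp: "poly (ffp i) (of_nat D) = (ffc D i :: 'a::field_char_0)"
  unfolding ffp_def ffc_def poly_prod by simp

lemma ffc_zero: "D < i \<Longrightarrow> ffc D i = 0"
  unfolding ffc_def by (rule prod_zero) auto

lemma pochhammer_ffc:
  "i \<le> D \<Longrightarrow> pochhammer (of_nat (Suc (D - i))) i = (ffc D i :: 'a::field_char_0)"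
proof (induction i arbitrary: D)
  case 0 then show ?case by (simp add: ffc_def)
next
  case (Suc i)
  have e1: "of_nat (Suc (D - Suc i)) = (of_nat D - of_nat i :: 'a)"
    using Suc.prems by (simp add: of_nat_diff)
  have e2: "of_nat (Suc (D - Suc i)) + 1 = (of_nat (Suc (D - i)) :: 'a)"
    using Suc.prems by simp
  have IH': "pochhammer (of_nat (Suc (D - i)) :: 'a) i = ffc D i"
    using Suc.prems by (intro Suc.IH) simp
  have "pochhammer (of_nat (Suc (D - Suc i)) :: 'a) (Suc i)
        = of_nat (Suc (D - Suc i)) * pochhammer (of_nat (Suc (D - Suc i)) + 1) i"
    by (rule pochhammer_rec)
  also have "\<dots> = (of_nat D - of_nat i) * ffc D i"
    by (subst e2, subst IH', subst e1, rule refl)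
  also have "\<dots> = ffc D (Suc i)" by (simp add: ffc_def mult.commute)
  finally show ?case .
qed

lemma coeff_deriv_top:
  fixes p :: "'a::field_char_0 poly"
  assumes "i \<le> degree p"
  shows "coeff ((pderiv ^^ i) p) (degree p - i) = ffc (degree p) i * lead_coeff p"
  by (simp only: coeff_higher_pderiv pochhammer_ffc[OF assms]) (simp add: assms)

lemma ffmat_det:
  fixes D :: "nat \<Rightarrow> nat"
  assumes inj: "\<And>j j'. j < d \<Longrightarrow> j' < d \<Longrightarrow> D j = D j' \<Longrightarrow> j = j'"
  shows "det (mat d d (\<lambda>(j,i). ffc (D j) i :: 'a::field_char_0)) \<noteq> 0"
proof
  let ?M = "mat d d (\<lambda>(j,i). ffc (D j) i :: 'a)"
  assume "det ?M = 0"
  then obtain v where v: "v \<in> carrier_vec d" "v \<noteq> 0\<^sub>v d" "?M *\<^sub>v v = 0\<^sub>v d"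
    using det_0_iff_vec_prod_zero_field[of ?M d] by auto
  have eq: "(\<Sum>i\<in>{0..<d}. ffc (D j) i * v $ i) = 0" if j: "j < d" for j
  proof -
    have "(?M *\<^sub>v v) $ j = 0" using v(3) j by simp
    then show ?thesis using j v(1) by (simp add: scalar_prod_def row_def)
  qed
  define P where "P = (\<Sum>i\<in>{0..<d}. Polynomial.smult (v $ i) (ffp i) :: 'a poly)"
  have root: "poly P (of_nat (D j)) = 0" if "j < d" for j
    using eq[OF that] unfolding P_def poly_sum by (simp add: poly_ffp mult.commute)
  have "\<exists>i0<d. v $ i0 \<noteq> 0"
  proof (rule ccontr)
    assume "\<not> (\<exists>i0<d. v $ i0 \<noteq> 0)"
    then have "v = 0\<^sub>v d" using v(1) by (intro eq_vecI) auto
    with v(2) show False by simp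
  qed
  then obtain i0 where i0: "i0 < d" "v $ i0 \<noteq> 0" by blast
  define i1 where "i1 = Max {i. i < d \<and> v $ i \<noteq> 0}"
  have fin: "finite {i. i < d \<and> v $ i \<noteq> 0}" by simp
  have ne: "{i. i < d \<and> v $ i \<noteq> 0} \<noteq> {}" using i0 by auto
  have i1: "i1 < d" "v $ i1 \<noteq> 0" using Max_in[OF fin ne] unfolding i1_def by auto
  have above: "v $ i = 0" if "i1 < i" "i < d" for i
  proof (rule ccontr)
    assume "v $ i \<noteq> 0"
    then have "i \<le> i1" unfolding i1_def using that(2) by (intro Max_ge[OF fin]) simp
    with that(1) show False by simp
  qed
  have "coeff P i1 = (\<Sum>i\<in>{0..<d}. v $ i * coeff (ffp i) i1)"
    unfolding P_def coeff_sum by simp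
  also have "\<dots> = (\<Sum>i\<in>{i1}. v $ i * coeff (ffp i) i1)"
  proof (rule sum.mono_neutral_right)
    show "\<forall>i\<in>{0..<d} - {i1}. v $ i * coeff (ffp i :: 'a poly) i1 = 0"
    proof
      fix i assume i: "i \<in> {0..<d} - {i1}"
      show "v $ i * coeff (ffp i :: 'a poly) i1 = 0"
      proof (cases "i < i1")
        case True then show ?thesis by (simp add: coeff_eq_0 ffp_degree)
      next
        case False then show ?thesis using above i by auto
      qed
    qed
  qed (use i1 in auto)
  also have "\<dots> = v $ i1" by (simp add: ffp_lc)
  finally have "P \<noteq> 0" using i1 by auto
  have degP: "degree P \<le> d - 1"
    unfolding P_def
  proof (rule degree_sum_le)
    fix i assume "i \<in> {0..<d}"
    then have "degree (ffp i :: 'a poly) \<le> d - 1" by (simp add: ffp_degree)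
    then show "degree (Polynomial.smult (v $ i) (ffp i :: 'a poly)) \<le> d - 1"
      using degree_smult_le le_trans by blast
  qed simp
  have "(\<lambda>j. of_nat (D j) :: 'a) ` {0..<d} \<subseteq> {x. poly P x = 0}" using root by auto
  then have "card ((\<lambda>j. of_nat (D j) :: 'a) ` {0..<d}) \<le> card {x. poly P x = 0}"
    by (rule card_mono[OF poly_roots_finite[OF \<open>P \<noteq> 0\<close>]])
  moreover have "card ((\<lambda>j. of_nat (D j) :: 'a) ` {0..<d}) = d"
  proof -
    have "inj_on (\<lambda>j. of_nat (D j) :: 'a) {0..<d}"
    proof (rule inj_onI)
      fix x y assume xy: "x \<in> {0..<d}" "y \<in> {0..<d}" "(of_nat (D x) :: 'a) = of_nat (D y)"
      then have "D x = D y" by simp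
      with xy show "x = y" using inj by simp
    qed
    then show ?thesis by (simp add: card_image)
  qed
  moreover have "card {x. poly P x = 0} \<le> degree P" by (rule card_poly_roots_bound[OF \<open>P \<noteq> 0\<close>])
  ultimately show False using degP i1 by linarith
qed


lemma smult_sum_right: "Polynomial.smult a (sum f S) = (\<Sum>i\<in>S. Polynomial.smult a (f i))"
  by (induction S rule: infinite_finite_induct) (auto simp: smult_add_right)

lemma ffc_nonzero: "i \<le> D \<Longrightarrow> ffc D i \<noteq> (0::'a::field_char_0)"
  unfolding ffc_def by (auto simp: prod_zero_iff)

lemma wr_nonzero_distinct:
  fixes h :: "nat \<Rightarrow> 'a::field_char_0 poly"
  assumes nz: "\<And>j. j < d \<Longrightarrow> h j \<noteq> 0"
    and dist: "\<And>j j'. j < d \<Longrightarrow> j' < d \<Longrightarrow> degree (h j) = degree (h j') \<Longrightarrow> j = j'"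
  shows "wr d h \<noteq> 0"
proof -
  define D where "D j = degree (h j)" for j
  define N where "N = (\<Sum>j=0..<d. D j) - (\<Sum>j=0..<d. j)"
  have tm: "coeff (\<Prod>j=0..<d. (pderiv ^^ (q j)) (h j)) N = (\<Prod>j=0..<d. ffc (D j) (q j) * lead_coeff (h j))"
    if q: "q permutes {0..<d}" for q
  proof (cases "\<forall>j<d. q j \<le> D j")
    case True
    have cf: "coeff ((pderiv ^^ (q j)) (h j)) (D j - q j) = ffc (D j) (q j) * lead_coeff (h j)" if "j < d" for j
      unfolding D_def by (rule coeff_deriv_top) (use True that in \<open>auto simp: D_def\<close>)
    have fnz: "(pderiv ^^ (q j)) (h j) \<noteq> 0" if "j < d" for j
    proof
      assume "(pderiv ^^ (q j)) (h j) = 0"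
      then have "ffc (D j) (q j) * lead_coeff (h j) = 0" using cf[OF that] by simp
      moreover have "ffc (D j) (q j) \<noteq> (0::'a)" using True that by (intro ffc_nonzero) simp
      moreover have "lead_coeff (h j) \<noteq> 0" using nz[OF that] by simp
      ultimately show False by simp
    qed
    have degf: "degree ((pderiv ^^ (q j)) (h j)) = D j - q j" for j
      by (simp add: degree_higher_pderiv D_def)
    have sumq: "(\<Sum>j=0..<d. q j) = (\<Sum>j=0..<d. j)" by (rule sum_permutes_id[OF q])
    have "(\<Sum>j=0..<d. D j) = (\<Sum>j=0..<d. (D j - q j) + q j)" by (rule sum.cong) (use True in auto)
    also have "\<dots> = (\<Sum>j=0..<d. D j - q j) + (\<Sum>j=0..<d. j)" by (simp add: sum.distrib sumq)
    finally have NN: "N = (\<Sum>j=0..<d. D j - q j)" unfolding N_def by simp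
    have degP: "degree (\<Prod>j=0..<d. (pderiv ^^ (q j)) (h j)) = N"
      unfolding NN by (subst degree_prod_eq_sum_degree) (use fnz degf in auto)
    have "coeff (\<Prod>j=0..<d. (pderiv ^^ (q j)) (h j)) N = lead_coeff (\<Prod>j=0..<d. (pderiv ^^ (q j)) (h j))"
      using degP by simp
    also have "\<dots> = (\<Prod>j=0..<d. lead_coeff ((pderiv ^^ (q j)) (h j)))" by (rule lead_coeff_prod)
    also have "\<dots> = (\<Prod>j=0..<d. ffc (D j) (q j) * lead_coeff (h j))"
      by (rule prod.cong) (use cf degf in auto)
    finally show ?thesis .
  next
    case False
    then obtain j where j: "j < d" "D j < q j" by auto
    have "(pderiv ^^ (q j)) (h j) = 0" using j by (intro higher_pderiv_zero) (simp add: D_def)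
    then have P0: "(\<Prod>j=0..<d. (pderiv ^^ (q j)) (h j)) = 0" using j by (intro prod_zero) auto
    have R0: "(\<Prod>j=0..<d. ffc (D j) (q j) * lead_coeff (h j)) = (0::'a)"
      using j by (intro prod_zero) (auto intro!: bexI[of _ j] simp: ffc_zero)
    show ?thesis by (simp only: P0 R0 coeff_0)
  qed
  let ?M = "mat d d (\<lambda>(j,i). ffc (D j) i :: 'a)"
  have detM: "det ?M \<noteq> 0" by (rule ffmat_det) (use dist in \<open>auto simp: D_def\<close>)
  have "det ?M = (\<Sum>q\<in>{q. q permutes {0..<d}}. signof q * (\<Prod>j=0..<d. ffc (D j) (q j)))"
    apply (subst det_def'[of _ d], simp)
    apply (rule sum.cong, simp)
    apply (rule arg_cong[where f="\<lambda>x. _ * x"])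
    apply (rule prod.cong, simp)
    by (metis (no_types, lifting) atLeastLessThan_iff case_prod_conv index_mat(1) mem_Collect_eq permutes_in_image)
  have "coeff (wr d h) N = (\<Sum>q\<in>{q. q permutes {0..<d}}. of_int (sign q) * coeff (\<Prod>j=0..<d. (pderiv ^^ (q j)) (h j)) N)"
    unfolding wr_expand coeff_sum by (rule sum.cong) (simp_all add: of_int_poly)
  also have "\<dots> = (\<Sum>q\<in>{q. q permutes {0..<d}}. of_int (sign q) * ((\<Prod>j=0..<d. ffc (D j) (q j)) * (\<Prod>j=0..<d. lead_coeff (h j))))"
    by (rule sum.cong) (simp_all add: tm prod.distrib)
  also have "\<dots> = det ?M * (\<Prod>j=0..<d. lead_coeff (h j))"
    unfolding \<open>det ?M = _\<close> sum_distrib_right by (simp add: mult.assoc)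
  finally have "coeff (wr d h) N = det ?M * (\<Prod>j=0..<d. lead_coeff (h j))" .
  moreover have "(\<Prod>j=0..<d. lead_coeff (h j)) \<noteq> 0" using nz by (auto simp: prod_zero_iff)
  ultimately have "coeff (wr d h) N \<noteq> 0" using detM by simp
  then show ?thesis by auto
qed


definition comb :: "nat \<Rightarrow> (nat \<Rightarrow> 'a::field_char_0) \<Rightarrow> (nat \<Rightarrow> 'a poly) \<Rightarrow> 'a poly" where
  "comb d c u = (\<Sum>k<d. Polynomial.smult (c k) (u k))"

definition indep :: "nat \<Rightarrow> (nat \<Rightarrow> 'a::field_char_0 poly) \<Rightarrow> bool" where
  "indep d u \<longleftrightarrow> (\<forall>c. comb d c u = 0 \<longrightarrow> (\<forall>k<d. c k = 0))"

lemma comb_lin: "comb d (\<lambda>k. c k - b * a k) u = comb d c u - Polynomial.smult b (comb d a u)"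
  unfolding comb_def smult_sum_right sum_subtractf[symmetric]
  by (rule sum.cong) (simp_all add: smult_diff_left)

lemma comb_Suc: "comb (Suc d) c u = comb d c u + Polynomial.smult (c d) (u d)"
  unfolding comb_def by simp

lemma comb_cong: "(\<And>k. k < d \<Longrightarrow> c k = c' k) \<Longrightarrow> comb d c u = comb d c' u"
  unfolding comb_def by (rule sum.cong) auto

lemma indep_Suc: "indep (Suc d) u \<Longrightarrow> indep d u"
  unfolding indep_def
proof (intro allI impI)
  fix c k assume H: "\<forall>c. comb (Suc d) c u = 0 \<longrightarrow> (\<forall>k<Suc d. c k = 0)" and c: "comb d c u = 0" and k: "k < d"
  define c' where "c' k = (if k < d then c k else 0)" for k
  have "comb d c' u = comb d c u" by (rule comb_cong) (simp add: c'_def)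
  then have "comb (Suc d) c' u = comb d c u"
    unfolding comb_Suc by (simp add: c'_def)
  with c have Z: "comb (Suc d) c' u = 0" by simp
  have "\<forall>k<Suc d. c' k = 0" using H Z by blast
  then have "c' k = 0" using k by simp
  with k show "c k = 0" by (simp add: c'_def)
qed

lemma indep_affine_nz: "indep (Suc d) u \<Longrightarrow> u d + comb d c u \<noteq> 0"
proof
  assume I: "indep (Suc d) u" and Z: "u d + comb d c u = 0"
  have "comb d (\<lambda>k. if k < d then c k else 1) u = comb d c u" by (rule comb_cong) simp
  then have "comb (Suc d) (\<lambda>k. if k < d then c k else 1) u = comb d c u + u d"
    unfolding comb_Suc by simp
  with Z have "comb (Suc d) (\<lambda>k. if k < d then c k else 1) u = 0" by (simp add: add.commute)
  with I have "(\<lambda>k. if k < d then c k else (1::'a)) d = 0" unfolding indep_def by blast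
  then show False by simp
qed

lemma echelon:
  fixes u :: "nat \<Rightarrow> 'a::field_char_0 poly"
  assumes "indep d u"
  shows "\<exists>A. (\<forall>j<d. comb d (A j) u \<noteq> 0) \<and>
             (\<forall>j<d. \<forall>j'<d. degree (comb d (A j) u) = degree (comb d (A j') u) \<longrightarrow> j = j')"
  using assms
proof (induction d)
  case 0 then show ?case by simp
next
  case (Suc d)
  from Suc.IH[OF indep_Suc[OF Suc.prems]] obtain A where
    A1: "\<forall>j<d. comb d (A j) u \<noteq> 0" and
    A2: "\<forall>j<d. \<forall>j'<d. degree (comb d (A j) u) = degree (comb d (A j') u) \<longrightarrow> j = j'" by blast
  define P where "P n \<longleftrightarrow> (\<exists>c. degree (u d + comb d c u) = n)" for n
  define n0 where "n0 = (LEAST n. P n)"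
  have "P (degree (u d + comb d (\<lambda>_. 0) u))" unfolding P_def by blast
  then have "P n0" unfolding n0_def by (rule LeastI)
  then obtain c0 where c0: "degree (u d + comb d c0 u) = n0" unfolding P_def by blast
  define q where "q = u d + comb d c0 u"
  have qnz: "q \<noteq> 0" unfolding q_def by (rule indep_affine_nz[OF Suc.prems])
  have qdist: "degree q \<noteq> degree (comb d (A j) u)" if j: "j < d" for j
  proof
    assume eq: "degree q = degree (comb d (A j) u)"
    define h where "h = comb d (A j) u"
    have hnz: "h \<noteq> 0" unfolding h_def using A1 j by auto
    define b where "b = lead_coeff q / lead_coeff h"
    define q' where "q' = u d + comb d (\<lambda>k. c0 k - b * A j k) u"
    have q'eq: "q' = q - Polynomial.smult b h"
      unfolding q'_def q_def h_def comb_lin by simp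
    have q'nz: "q' \<noteq> 0" unfolding q'_def by (rule indep_affine_nz[OF Suc.prems])
    have dle: "degree q' \<le> degree q"
      unfolding q'eq by (rule degree_diff_le) (use degree_smult_le eq h_def in auto)
    have "coeff q' (degree q) = lead_coeff q - b * lead_coeff h"
      unfolding q'eq using eq h_def by simp
    also have "\<dots> = 0" unfolding b_def using hnz by simp
    finally have c0': "coeff q' (degree q) = 0" .
    have "degree q' \<noteq> degree q"
    proof
      assume "degree q' = degree q"
      with c0' have "lead_coeff q' = 0" by simp
      with q'nz show False by simp
    qed
    with dle have lt: "degree q' < degree q" by simp
    have "P (degree q')" unfolding P_def q'_def by blast
    then have "n0 \<le> degree q'" unfolding n0_def by (rule Least_le)
    with lt c0 q_def show False by simp
  qed
  define A' where "A' j = (if j < d then (\<lambda>k. if k < d then A j k else 0) else (\<lambda>k. if k < d then c0 k else 1))" for j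
  have cA: "comb (Suc d) (A' j) u = (if j < d then comb d (A j) u else q)" for j
  proof (cases "j < d")
    case True
    have "comb d (A' j) u = comb d (A j) u" by (rule comb_cong) (simp add: A'_def True)
    then show ?thesis unfolding comb_Suc using True by (simp add: A'_def)
  next
    case False
    have "comb d (A' j) u = comb d c0 u" by (rule comb_cong) (simp add: A'_def False)
    then show ?thesis unfolding comb_Suc q_def using False by (simp add: A'_def add.commute)
  qed
  show ?case
  proof (intro exI[of _ A'] conjI allI impI)
    fix j assume "j < Suc d"
    then show "comb (Suc d) (A' j) u \<noteq> 0" unfolding cA using A1 qnz by auto
  next
    fix j j' assume j: "j < Suc d" and j': "j' < Suc d"
      and e: "degree (comb (Suc d) (A' j) u) = degree (comb (Suc d) (A' j') u)"
    show "j = j'"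
    proof (cases "j < d"; cases "j' < d")
      assume "j < d" "j' < d" then show ?thesis using e A2 unfolding cA by auto
    next
      assume "j < d" "\<not> j' < d" then show ?thesis using e qdist[of j] unfolding cA by auto
    next
      assume "\<not> j < d" "j' < d" then show ?thesis using e qdist[of j'] unfolding cA by auto
    next
      assume "\<not> j < d" "\<not> j' < d" then show ?thesis using j j' by auto
    qed
  qed
qed

lemma wr_indep_nonzero:
  fixes u :: "nat \<Rightarrow> 'a::field_char_0 poly"
  assumes "indep d u"
  shows "wr d u \<noteq> 0"
proof -
  obtain A where A1: "\<forall>j<d. comb d (A j) u \<noteq> 0" and
    A2: "\<forall>j<d. \<forall>j'<d. degree (comb d (A j) u) = degree (comb d (A j') u) \<longrightarrow> j = j'"
    using echelon[OF assms] by blast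
  define h where "h j = comb d (A j) u" for j
  have "wr d h \<noteq> 0" by (rule wr_nonzero_distinct) (use A1 A2 in \<open>auto simp: h_def\<close>)
  moreover have "wr d h = [:det (mat d d (\<lambda>(j,k). A j k)):] * wr d u"
    by (rule wr_lin) (simp add: h_def comb_def)
  ultimately show ?thesis by auto
qed


lemma det_rowrep:
  assumes i0: "i0 < d"
  shows "det (mat d d (\<lambda>(j,k). if j = i0 then c k else if j = k then 1 else (0::'a::field_char_0))) = c i0"
proof -
  let ?M = "mat d d (\<lambda>(j,k). if j = i0 then c k else if j = k then 1 else (0::'a))"
  have dd: "det ?M = (\<Sum>q\<in>{q. q permutes {0..<d}}. signof q * (\<Prod>j=0..<d. ?M $$ (j, q j)))"
    by (rule det_def') simp
  have z: "(\<Prod>j=0..<d. ?M $$ (j, q j)) = 0" if q: "q permutes {0..<d}" "q \<noteq> id" for q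
  proof -
    have inS: "q x < d" if "x < d" for x using permutes_in_image[OF q(1)] that by simp
    have "\<exists>j<d. j \<noteq> i0 \<and> q j \<noteq> j"
    proof (rule ccontr)
      assume H: "\<not> (\<exists>j<d. j \<noteq> i0 \<and> q j \<noteq> j)"
      have qi0: "q i0 = i0"
      proof (rule ccontr)
        assume ne: "q i0 \<noteq> i0"
        have "q (q i0) = q i0" using H ne inS[OF i0] by auto
        then have "q i0 = i0" using permutes_inj[OF q(1)] by (simp add: inj_eq)
        with ne show False by simp
      qed
      have "q x = x" for x
      proof (cases "x < d")
        case True then show ?thesis using H qi0 by (cases "x = i0") auto
      next
        case False then show ?thesis using permutes_not_in[OF q(1)] by simp
      qed
      then have "q = id" by auto
      with q(2) show False by simp
    qed
    then obtain j where j: "j < d" "j \<noteq> i0" "q j \<noteq> j" by blast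
    have "?M $$ (j, q j) = 0" using j inS[OF j(1)] by simp
    then show ?thesis using j by (intro prod_zero) auto
  qed
  have "det ?M = (\<Sum>q\<in>{id}. signof q * (\<Prod>j=0..<d. ?M $$ (j, q j)))"
    unfolding dd
  proof (rule sum.mono_neutral_right)
    show "finite {q. q permutes {0..<d}}" by (simp add: finite_permutations)
    show "{id} \<subseteq> {q. q permutes {0..<d}}" by simp
    show "\<forall>q\<in>{q. q permutes {0..<d}} - {id}. signof q * (\<Prod>j=0..<d. ?M $$ (j, q j)) = 0"
    proof
      fix q assume "q \<in> {q. q permutes {0..<d}} - {id}"
      then have "q permutes {0..<d}" "q \<noteq> id" by auto
      then have "(\<Prod>j=0..<d. ?M $$ (j, q j)) = 0" by (rule z)
      then show "signof q * (\<Prod>j=0..<d. ?M $$ (j, q j)) = 0" by (simp only: mult_zero_right)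
    qed
  qed
  also have "\<dots> = (\<Prod>j=0..<d. ?M $$ (j, j))" by simp
  also have "\<dots> = ?M $$ (i0, i0) * (\<Prod>j\<in>{0..<d} - {i0}. ?M $$ (j, j))"
    using i0 by (subst prod.remove[of _ i0]) auto
  also have "(\<Prod>j\<in>{0..<d} - {i0}. ?M $$ (j, j)) = 1" by (rule prod.neutral) auto
  finally show ?thesis using i0 by simp
qed

lemma order_sum_le_degree:
  fixes p :: "'a::field_char_0 poly"
  assumes p: "p \<noteq> 0" and r: "r \<noteq> 0"
  shows "order 0 p + order r p \<le> degree p"
proof -
  obtain p1 where p1: "p = [:-0,1:]^(order 0 p) * p1" using order_1[of 0 p] by (auto elim: dvdE)
  have p1nz: "p1 \<noteq> 0" using p p1 by auto
  have "order r p = order r ([:-0,1:]^(order 0 p)) + order r p1"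
    using p by (subst p1, subst order_mult) (use p p1 in auto)
  also have "order r ([:-0,1:]^(order 0 p)) = 0" using r by (intro order_0I) simp
  finally have or: "order r p = order r p1" by simp
  have "degree ([:-r,1:]^(order r p1)) \<le> degree p1" by (rule dvd_imp_degree_le[OF order_1 p1nz])
  then have "order r p1 \<le> degree p1" by (simp add: degree_linear_power)
  moreover have "degree p = order 0 p + degree p1"
    using p1nz by (subst p1) (simp add: degree_mult_eq degree_linear_power)
  ultimately show ?thesis using or by simp
qed

lemma KL:
  fixes a b :: "nat \<Rightarrow> nat" and r :: "'a::field_char_0" and c :: "nat \<Rightarrow> 'a"
  assumes u: "\<And>k. u k = [:0,1:]^(a k) * [:-r,1:]^(b k)"
    and r: "r \<noteq> 0" and ind: "indep d u" and i0: "i0 < d" "c i0 \<noteq> 0"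
  shows "comb d c u \<noteq> 0 \<and> order 0 (comb d c u) \<le> a i0 + (\<Sum>j=0..<d. j)"
proof -
  define g where "g = comb d c u"
  have gnz: "g \<noteq> 0" using ind i0 unfolding g_def indep_def by blast
  define h where "h j = (if j = i0 then g else u j)" for j
  define B where "B j k = (if j = i0 then c k else if j = k then 1 else (0::'a))" for j k
  have hB: "h j = (\<Sum>k<d. Polynomial.smult (B j k) (u k))" if j: "j < d" for j
  proof (cases "j = i0")
    case True then show ?thesis by (simp add: h_def B_def g_def comb_def)
  next
    case False
    have "(\<Sum>k<d. Polynomial.smult (B j k) (u k)) = (\<Sum>k\<in>{j}. Polynomial.smult (B j k) (u k))"
      by (rule sum.mono_neutral_right) (use j False in \<open>auto simp: B_def\<close>)
    then show ?thesis using False by (simp add: h_def B_def)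
  qed
  have detB: "det (mat d d (\<lambda>(j,k). B j k)) = c i0"
    unfolding B_def by (rule det_rowrep[OF i0(1)])
  have Wh: "wr d h = [:c i0:] * wr d u" using wr_lin[of d h B u] hB detB by simp
  have Wu: "wr d u \<noteq> 0" by (rule wr_indep_nonzero[OF ind])
  define C where "C = (\<Sum>j=0..<d. j)"
  define m where "m j = (if j = i0 then order 0 g else a j)" for j
  have "[:-0,1:]^((\<Sum>j=0..<d. m j) - C) dvd wr d h"
    unfolding C_def
  proof (rule wr_dvd)
    fix j assume "j < d"
    show "[:-0,1:]^(m j) dvd h j"
    proof (cases "j = i0")
      case True then show ?thesis using order_1[of 0 g] by (simp add: m_def h_def)
    next
      case False then show ?thesis by (simp add: m_def h_def u)
    qed
  qed
  then have dA: "[:-0,1:]^((\<Sum>j=0..<d. m j) - C) dvd wr d u"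
  proof -
    have "wr d u = Polynomial.smult (inverse (c i0)) ([:c i0:] * wr d u)" using i0(2) by simp
    then show ?thesis using \<open>_ dvd wr d h\<close> unfolding Wh by (metis dvd_smult)
  qed
  have dB: "[:-r,1:]^((\<Sum>j=0..<d. b j) - C) dvd wr d u"
    unfolding C_def by (rule wr_dvd) (simp add: u)
  have oA: "(\<Sum>j=0..<d. m j) - C \<le> order 0 (wr d u)" using dA Wu order_divides by blast
  have oB: "(\<Sum>j=0..<d. b j) - C \<le> order r (wr d u)" using dB Wu order_divides by blast
  have deg: "degree (wr d u) + C \<le> (\<Sum>j=0..<d. degree (u j))" unfolding C_def by (rule wr_degree[OF Wu])
  have degu: "degree (u j) = a j + b j" for j by (simp add: u degree_mult_eq degree_linear_power)
  have ord: "order 0 (wr d u) + order r (wr d u) \<le> degree (wr d u)" by (rule order_sum_le_degree[OF Wu r])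
  have sm: "(\<Sum>j=0..<d. m j) = order 0 g + (\<Sum>j\<in>{0..<d} - {i0}. a j)"
    using i0(1) by (subst sum.remove[of _ i0]) (auto simp: m_def intro!: sum.cong)
  have sa: "(\<Sum>j=0..<d. a j) = a i0 + (\<Sum>j\<in>{0..<d} - {i0}. a j)"
    using i0(1) by (subst sum.remove[of _ i0]) auto
  have sd: "(\<Sum>j=0..<d. degree (u j)) = (\<Sum>j=0..<d. a j) + (\<Sum>j=0..<d. b j)"
    by (simp add: degu sum.distrib)
  have "order 0 g \<le> a i0 + C"
    using oA oB deg ord sm sa sd by linarith
  then show ?thesis using gnz unfolding g_def C_def by simp
qed


lemma sum_upto_mono: "n \<le> m \<Longrightarrow> (\<Sum>i=0..<n. i) \<le> (\<Sum>i=0..<(m::nat). i)"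
  by (rule sum_mono2) auto

lemma valuation_bound:
  fixes al b :: "nat \<Rightarrow> nat" and r :: "'a::field_char_0" and e :: "nat \<Rightarrow> 'a"
  assumes r: "r \<noteq> 0" and fin: "finite S"
    and nz: "(\<Sum>j\<in>S. Polynomial.smult (e j) ([:0,1:]^(al j) * [:-r,1:]^(b j))) \<noteq> 0"
  shows "\<exists>j\<in>S. order 0 (\<Sum>j\<in>S. Polynomial.smult (e j) ([:0,1:]^(al j) * [:-r,1:]^(b j)))
                 \<le> al j + (\<Sum>i=0..<card {k\<in>S. j \<le> k}. i)"
  using fin nz
proof (induction "card S" arbitrary: S e rule: less_induct)
  case less
  define f where "f j = [:0,1:]^(al j) * [:-r,1:]^(b j)" for j
  define g where "g = (\<Sum>j\<in>S. Polynomial.smult (e j) (f j))"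
  have gnz: "g \<noteq> 0" using less.prems unfolding g_def f_def by simp
  show ?case
  proof (cases "\<forall>l. (\<Sum>j\<in>S. Polynomial.smult (l j) (f j)) = 0 \<longrightarrow> (\<forall>j\<in>S. l j = 0)")
    case False
    then obtain l m where l0: "(\<Sum>j\<in>S. Polynomial.smult (l j) (f j)) = 0" and m: "m \<in> S" "l m \<noteq> 0" by blast
    define e' where "e' j = e j - (e m / l m) * l j" for j
    have "(\<Sum>j\<in>S. Polynomial.smult (e' j) (f j)) = g - Polynomial.smult (e m / l m) (\<Sum>j\<in>S. Polynomial.smult (l j) (f j))"
      unfolding e'_def g_def smult_sum_right sum_subtractf[symmetric]
      by (rule sum.cong) (simp_all add: smult_diff_left)
    also have "\<dots> = g" using l0 by simp
    finally have g1: "(\<Sum>j\<in>S. Polynomial.smult (e' j) (f j)) = g" .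
    have e'm: "e' m = 0" using m by (simp add: e'_def)
    have g2: "(\<Sum>j\<in>S - {m}. Polynomial.smult (e' j) (f j)) = g"
      using g1 less.prems(1) m e'm by (subst (asm) sum.remove[of _ m]) auto
    have lt: "card (S - {m}) < card S" using less.prems(1) m by (meson card_Diff1_less)
    from less.hyps[OF lt, of e'] g2 gnz less.prems(1)
    obtain j where j: "j \<in> S - {m}"
      and ord: "order 0 g \<le> al j + (\<Sum>i=0..<card {k\<in>S - {m}. j \<le> k}. i)"
      unfolding f_def by auto
    have "card {k\<in>S - {m}. j \<le> k} \<le> card {k\<in>S. j \<le> k}"
      by (rule card_mono) (use less.prems(1) in auto)
    then have "(\<Sum>i=0..<card {k\<in>S - {m}. j \<le> k}. i) \<le> (\<Sum>i=0..<card {k\<in>S. j \<le> k}. i)"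
      by (rule sum_upto_mono)
    then show ?thesis using ord j unfolding g_def f_def by (intro bexI[of _ j]) auto
  next
    case True
    note indS = True
    define T where "T = {k\<in>S. e k \<noteq> 0}"
    have Tne: "T \<noteq> {}"
    proof
      assume "T = {}"
      then have "g = 0" unfolding g_def T_def by (intro sum.neutral) auto
      with gnz show False by simp
    qed
    have finT: "finite T" using less.prems(1) unfolding T_def by simp
    define j where "j = Min T"
    have jT: "j \<in> T" unfolding j_def using Min_in[OF finT Tne] .
    have jmin: "e k = 0" if "k \<in> S" "k < j" for k
    proof (rule ccontr)
      assume "e k \<noteq> 0"
      then have "k \<in> T" using that unfolding T_def by simp
      then have "j \<le> k" unfolding j_def using Min_le[OF finT] by simp
      with that show False by simp
    qed
    define S' where "S' = {k\<in>S. j \<le> k}"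
    have finS': "finite S'" using less.prems(1) unfolding S'_def by simp
    have jS': "j \<in> S'" using jT unfolding S'_def T_def by simp
    define d where "d = card S'"
    obtain \<phi> where phi: "bij_betw \<phi> {0..<d} S'" unfolding d_def using ex_bij_betw_nat_finite[OF finS'] by blast
    have gS': "g = (\<Sum>k\<in>S'. Polynomial.smult (e k) (f k))"
      unfolding g_def S'_def
    proof (rule sum.mono_neutral_right)
      show "\<forall>i\<in>S - {k \<in> S. j \<le> k}. Polynomial.smult (e i) (f i) = 0"
      proof
        fix i assume "i \<in> S - {k \<in> S. j \<le> k}"
        then have "i \<in> S" "i < j" by auto
        then show "Polynomial.smult (e i) (f i) = 0" using jmin by simp
      qed
    qed (use less.prems(1) in auto)
    define u where "u i = f (\<phi> i)" for i
    define c where "c i = e (\<phi> i)" for i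
    have combg: "comb d c u = g"
      unfolding comb_def gS' u_def c_def lessThan_atLeast0
      by (rule sum.reindex_bij_betw[OF phi])
    have ind: "indep d u"
      unfolding indep_def
    proof (intro allI impI)
      fix c' k assume z: "comb d c' u = 0" and k: "k < d"
      define l where "l x = (if x \<in> S' then c' (inv_into {0..<d} \<phi> x) else 0)" for x
      have "(\<Sum>x\<in>S. Polynomial.smult (l x) (f x)) = (\<Sum>x\<in>S'. Polynomial.smult (l x) (f x))"
        by (rule sum.mono_neutral_right) (use less.prems(1) in \<open>auto simp: l_def S'_def\<close>)
      also have "\<dots> = (\<Sum>i\<in>{0..<d}. Polynomial.smult (l (\<phi> i)) (f (\<phi> i)))"
        by (rule sum.reindex_bij_betw[OF phi, symmetric])
      also have "\<dots> = comb d c' u"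
        unfolding comb_def lessThan_atLeast0 u_def
      proof (rule sum.cong)
        fix i assume i: "i \<in> {0..<d}"
        have "\<phi> i \<in> S'" using phi i by (auto dest: bij_betw_apply)
        moreover have "inv_into {0..<d} \<phi> (\<phi> i) = i"
          using i phi by (simp add: bij_betw_inv_into_left)
        ultimately show "Polynomial.smult (l (\<phi> i)) (f (\<phi> i)) = Polynomial.smult (c' i) (f (\<phi> i))"
          by (simp add: l_def)
      qed simp
      finally have "(\<Sum>x\<in>S. Polynomial.smult (l x) (f x)) = 0" using z by simp
      with indS have "\<forall>x\<in>S. l x = 0" by blast
      moreover have "\<phi> k \<in> S'" using phi k by (auto dest: bij_betw_apply)
      moreover have "inv_into {0..<d} \<phi> (\<phi> k) = k"
        using k phi by (simp add: bij_betw_inv_into_left)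
      ultimately show "c' k = 0" unfolding l_def S'_def by auto
    qed
    define i0 where "i0 = inv_into {0..<d} \<phi> j"
    have i0d: "i0 \<in> {0..<d}" unfolding i0_def by (rule bij_betw_apply[OF bij_betw_inv_into[OF phi] jS'])
    have phii0: "\<phi> i0 = j" unfolding i0_def using phi jS' by (meson bij_betw_inv_into_right)
    have ci0: "c i0 \<noteq> 0" unfolding c_def phii0 using jT T_def by simp
    have uform: "u k = [:0,1:]^((al \<circ> \<phi>) k) * [:-r,1:]^((b \<circ> \<phi>) k)" for k
      by (simp add: u_def f_def)
    have "comb d c u \<noteq> 0 \<and> order 0 (comb d c u) \<le> (al \<circ> \<phi>) i0 + (\<Sum>j=0..<d. j)"
      by (rule KL[OF uform r ind]) (use i0d ci0 in auto)
    then have "order 0 g \<le> al j + (\<Sum>i=0..<card {k\<in>S. j \<le> k}. i)"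
      using combg phii0 unfolding d_def S'_def by simp
    then show ?thesis using jT unfolding g_def f_def T_def by auto
  qed
qed


definition sig :: "'a::field_char_0 \<Rightarrow> 'a \<Rightarrow> 'a \<Rightarrow> 'a poly poly" where
  "sig u v w = [: [:-w/v, -u/v:], [:1/v:] :]"

lemma F_eq: "[:[:u:]:] * varX + [:[:v:]:] * varY + [:[:w:]:] = [:[:w,u:], [:(v::'a::field_char_0):]:]"
  unfolding varX_def varY_def by simp

lemma pcomp_F: "(v::'a::field_char_0) \<noteq> 0 \<Longrightarrow> pcompose [:[:w,u:], [:v:]:] (sig u v w) = [:0,1:]"
  unfolding sig_def by (simp add: pcompose_pCons)

lemma pcomp_sig: "(v::'a::field_char_0) \<noteq> 0 \<Longrightarrow> pcompose (sig u v w) [:[:w,u:], [:v:]:] = [:0,1:]"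
  unfolding sig_def by (simp add: pcompose_pCons)

lemma pcompose_power': "pcompose ((p::'b::comm_ring_1 poly) ^ n) q = (pcompose p q) ^ n"
proof (induction n)
  case 0 show ?case by (simp only: power_0 pcompose_1)
next
  case (Suc n) then show ?case by (simp only: power_Suc pcompose_mult)
qed

lemma pcompose_X: "pcompose [:0,1:] (q::'b::comm_ring_1 poly) = q"
  by (simp add: pcompose_pCons)

lemma X_pow_dvd_iff: "([:0,1:] ^ m dvd (p::'b::comm_semiring_1 poly)) \<longleftrightarrow> (\<forall>k<m. coeff p k = 0)"
  using monom_1_dvd_iff'[of m p] by (simp add: monom_altdef)

lemma F_dvd_iff:
  fixes P :: "'a::field_char_0 poly poly"
  assumes v: "v \<noteq> 0"
  shows "([:[:w,u:], [:v:]:] ^ m dvd P) \<longleftrightarrow> (\<forall>k<m. coeff (pcompose P (sig u v w)) k = 0)"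
proof -
  let ?F = "[:[:w,u:], [:v:]:]" and ?s = "sig u v w"
  have "?F ^ m dvd P \<longleftrightarrow> [:0,1:] ^ m dvd pcompose P ?s"
  proof
    assume "?F ^ m dvd P"
    then obtain Q where "P = ?F ^ m * Q" by (auto elim: dvdE)
    then have "pcompose P ?s = [:0,1:] ^ m * pcompose Q ?s"
      by (simp add: pcompose_mult pcompose_power' pcomp_F[OF v])
    then show "[:0,1:] ^ m dvd pcompose P ?s" by simp
  next
    assume "[:0,1:] ^ m dvd pcompose P ?s"
    then obtain G where G: "pcompose P ?s = [:0,1:] ^ m * G" by (auto elim: dvdE)
    have "P = pcompose P (pcompose ?s ?F)" by (simp add: pcomp_sig[OF v])
    also have "\<dots> = pcompose (pcompose P ?s) ?F" by (rule pcompose_assoc)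
    also have "\<dots> = ?F ^ m * pcompose G ?F"
      unfolding G by (simp add: pcompose_mult pcompose_power' pcompose_X)
    finally show "?F ^ m dvd P" by simp
  qed
  then show ?thesis by (simp add: X_pow_dvd_iff)
qed

lemma tau_zero_iff:
  fixes P :: "'a::field_char_0 poly poly"
  assumes v: "v \<noteq> 0"
  shows "pcompose P (sig u v w) = 0 \<longleftrightarrow> P = 0"
proof
  let ?F = "[:[:w,u:], [:v:]:]" and ?s = "sig u v w"
  assume "pcompose P ?s = 0"
  have "P = pcompose P (pcompose ?s ?F)" by (simp add: pcomp_sig[OF v])
  also have "\<dots> = pcompose (pcompose P ?s) ?F" by (rule pcompose_assoc)
  finally show "P = 0" using \<open>pcompose P ?s = 0\<close> by simp
qed simp

lemma mult_char:
  fixes P :: "'a::field_char_0 poly poly"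
  assumes v: "v \<noteq> 0"
  shows "mult_F [:[:w,u:], [:v:]:] P =
    (if \<forall>k. coeff (pcompose P (sig u v w)) k = 0 then \<infinity>
     else enat (LEAST k. coeff (pcompose P (sig u v w)) k \<noteq> 0))"
proof (cases "P = 0")
  case True then show ?thesis by (simp add: mult_F_def)
next
  case False
  let ?L = "\<lambda>k. coeff (pcompose P (sig u v w)) k"
  have ex: "\<exists>k. ?L k \<noteq> 0"
  proof (rule ccontr)
    assume "\<not> (\<exists>k. ?L k \<noteq> 0)"
    then have "pcompose P (sig u v w) = 0" by (intro poly_eqI) simp
    with False tau_zero_iff[OF v] show False by simp
  qed
  define m where "m = (LEAST k. ?L k \<noteq> 0)"
  have m1: "?L m \<noteq> 0" unfolding m_def using ex by (rule LeastI_ex)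
  have m2: "?L k = 0" if "k < m" for k using not_less_Least[of k "\<lambda>k. ?L k \<noteq> 0"] that unfolding m_def by blast
  have "(GREATEST mu. [:[:w,u:], [:v:]:] ^ mu dvd P) = m"
  proof (rule Greatest_equality)
    show "[:[:w,u:], [:v:]:] ^ m dvd P" unfolding F_dvd_iff[OF v] using m2 by blast
    fix y assume "[:[:w,u:], [:v:]:] ^ y dvd P"
    then have "\<forall>k<y. ?L k = 0" unfolding F_dvd_iff[OF v] .
    with m1 show "y \<le> m" by (meson not_le)
  qed
  then show ?thesis using False ex unfolding mult_F_def m_def by auto
qed

lemma cpow: "[:c:]^k = [:(c::'b::comm_ring_1)^k:]"
  by (induction k) auto

lemma L_bimonom:
  fixes a u v w r :: "'a::field_char_0"
  assumes r: "u * r = - w" and v: "v \<noteq> 0"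
  shows "coeff (pcompose (bimonom a al be) (sig u v w)) k =
    Polynomial.smult (a * of_nat (be choose k) * (1/v)^k * (-u/v)^(be-k))
      ([:0,1:]^al * [:-r,1:]^(be-k))"
proof -
  have p0: "[:-w/v, -u/v:] = Polynomial.smult (-u/v) [:-r,1:]" using r v
    by (simp add: field_simps)
  have "bimonom a al be = Polynomial.smult (monom a al) ([:0,1:]^be)"
    unfolding bimonom_def by (simp add: monom_altdef)
  then have "pcompose (bimonom a al be) (sig u v w) = Polynomial.smult (monom a al) ((sig u v w)^be)"
    by (simp add: pcompose_smult pcompose_power' pcompose_X)
  then have "coeff (pcompose (bimonom a al be) (sig u v w)) k = monom a al * coeff ((sig u v w)^be) k"
    by simp
  also have "coeff ((sig u v w)^be) k = of_nat (be choose k) * [:1/v:]^k * [:-w/v, -u/v:]^(be-k)"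
  proof (cases "k \<le> be")
    case True then show ?thesis unfolding sig_def by (rule coeff_linear_poly_power)
  next
    case False
    have "degree ((sig u v w)^be) \<le> be"
      using degree_power_le[of "sig u v w" be] v by (simp add: sig_def)
    then have "coeff ((sig u v w)^be) k = 0" using False by (intro coeff_eq_0) simp
    with False show ?thesis by simp
  qed
  also have "monom a al * (of_nat (be choose k) * [:1/v:]^k * [:-w/v, -u/v:]^(be-k))
     = Polynomial.smult a ([:0,1:]^al) * ([:of_nat (be choose k):] * [:(1/v)^k:] *
        Polynomial.smult ((-u/v)^(be-k)) ([:-r,1:]^(be-k)))"
    unfolding p0 smult_power by (simp add: monom_altdef cpow of_nat_poly)
  also have "\<dots> = Polynomial.smult (a * of_nat (be choose k) * (1/v)^k * (-u/v)^(be-k))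
      ([:0,1:]^al * [:-r,1:]^(be-k))"
    by (simp add: mult_ac)
  finally show ?thesis .
qed


lemma choose2_sum: "(n choose 2) = (\<Sum>i=0..<n. i)"
proof (induction n)
  case 0 then show ?case by simp
next
  case (Suc n)
  have "(Suc n choose 2) = (n choose 1) + (n choose 2)" by (simp add: numeral_2_eq_2)
  then show ?case using Suc by simp
qed

lemma sum_upto_add: "(\<Sum>i=0..<a. i) + (\<Sum>i=0..<b. i) \<le> (\<Sum>i=0..<a+(b::nat). i)"
  by (induction b) auto

lemma least_combine:
  assumes "\<And>m. C m \<longleftrightarrow> A m \<or> B m"
  shows "(if \<forall>m. \<not> C m then \<infinity> else enat (LEAST m. C m)) =
         min (if \<forall>m. \<not> A m then \<infinity> else enat (LEAST m. A m))
             (if \<forall>m. \<not> B m then \<infinity> else enat (LEAST m. B m))"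
proof (cases "\<exists>m. A m"; cases "\<exists>m. B m")
  assume a: "\<exists>m. A m" and b: "\<exists>m. B m"
  have c: "\<exists>m. C m" using a assms by blast
  have "(LEAST m. C m) = min (LEAST m. A m) (LEAST m. B m)"
  proof -
    have "(LEAST m. C m) \<le> (LEAST m. A m)" using assms LeastI_ex[OF a] by (intro Least_le) blast
    moreover have "(LEAST m. C m) \<le> (LEAST m. B m)" using assms LeastI_ex[OF b] by (intro Least_le) blast
    moreover have "A (LEAST m. C m) \<or> B (LEAST m. C m)" using assms LeastI_ex[OF c] by blast
    then have "(LEAST m. A m) \<le> (LEAST m. C m) \<or> (LEAST m. B m) \<le> (LEAST m. C m)"
      by (auto intro: Least_le)
    ultimately show ?thesis by linarith
  qed
  then show ?thesis using a b c by auto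
next
  assume a: "\<exists>m. A m" and b: "\<not> (\<exists>m. B m)"
  have "C = A" using assms b by auto
  then show ?thesis using a b by auto
next
  assume a: "\<not> (\<exists>m. A m)" and b: "\<exists>m. B m"
  have "C = B" using assms a by auto
  then show ?thesis using a b by auto
next
  assume a: "\<not> (\<exists>m. A m)" and b: "\<not> (\<exists>m. B m)"
  have "\<forall>m. \<not> C m" using assms a b by auto
  then show ?thesis using a b by auto
qed

theorem theorem3p1:
  fixes a :: "nat \<Rightarrow> 'a::field_char_0"
    and alpha beta :: "nat \<Rightarrow> nat"
    and k l :: nat
    and u v w :: 'a
  assumes mono: "\<And>i j. 1 \<le> i \<Longrightarrow> i \<le> j \<Longrightarrow> j \<le> k \<Longrightarrow> alpha i \<le> alpha j"
    and l_range: "1 \<le> l" "l < k"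
    and l_prop: "alpha (l + 1) > alpha 1 + (l choose 2)"
    and l_least: "\<And>i. 1 \<le> i \<Longrightarrow> i < l \<Longrightarrow> \<not> (alpha (i + 1) > alpha 1 + (i choose 2))"
    and uvw: "u * v * w \<noteq> 0"
  shows "mult_F ([:[:u:]:] * varX + [:[:v:]:] * varY + [:[:w:]:])
            ((\<Sum>j=1..l. bimonom (a j) (alpha j) (beta j)) + (\<Sum>j=l+1..k. bimonom (a j) (alpha j) (beta j)))
         = min (mult_F ([:[:u:]:] * varX + [:[:v:]:] * varY + [:[:w:]:]) (\<Sum>j=1..l. bimonom (a j) (alpha j) (beta j)))
               (mult_F ([:[:u:]:] * varX + [:[:v:]:] * varY + [:[:w:]:]) (\<Sum>j=l+1..k. bimonom (a j) (alpha j) (beta j)))"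
proof -
  have u0: "u \<noteq> 0" and v0: "v \<noteq> 0" and w0: "w \<noteq> 0" using uvw by auto
  define r where "r = - w / u"
  have ur: "u * r = - w" unfolding r_def using u0 by simp
  have r0: "r \<noteq> 0" unfolding r_def using u0 w0 by simp
  define Q where "Q = (\<Sum>j=1..l. bimonom (a j) (alpha j) (beta j))"
  define R where "R = (\<Sum>j=l+1..k. bimonom (a j) (alpha j) (beta j))"
  define L where "L m P = coeff (pcompose P (sig u v w)) m" for m P
  define e where "e m j = a j * of_nat (beta j choose m) * (1/v)^m * (-u/v)^(beta j - m)" for m j
  have Lsum: "L m (\<Sum>j\<in>S. bimonom (a j) (alpha j) (beta j)) =
      (\<Sum>j\<in>S. Polynomial.smult (e m j) ([:0,1:]^(alpha j) * [:-r,1:]^(beta j - m)))" for m S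
    unfolding L_def pcompose_sum coeff_sum e_def
    by (rule sum.cong) (simp_all add: L_bimonom[OF ur v0])
  have Ladd: "L m (Q + R) = L m Q + L m R" for m unfolding L_def by (simp add: pcompose_add)
  have chain: "alpha j \<le> alpha 1 + ((j - 1) choose 2)" if "1 \<le> j" "j \<le> l" for j
  proof (cases "j = 1")
    case True then show ?thesis by simp
  next
    case False
    then have "\<not> (alpha (j - 1 + 1) > alpha 1 + ((j - 1) choose 2))"
      using that by (intro l_least) auto
    then show ?thesis using False that by simp
  qed
  have key: "L m Q = 0" if z: "L m (Q + R) = 0" for m
  proof (rule ccontr)
    assume nz: "L m Q \<noteq> 0"
    have nz': "(\<Sum>j\<in>{1..l}. Polynomial.smult (e m j) ([:0,1:]^(alpha j) * [:-r,1:]^(beta j - m))) \<noteq> 0"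
      using nz unfolding Q_def Lsum .
    obtain j where j: "j \<in> {1..l}" and ordj:
      "order 0 (\<Sum>j\<in>{1..l}. Polynomial.smult (e m j) ([:0,1:]^(alpha j) * [:-r,1:]^(beta j - m)))
         \<le> alpha j + (\<Sum>i=0..<card {t\<in>{1..l}. j \<le> t}. i)"
      using valuation_bound[OF r0 _ nz', of ] by auto
    have card: "card {t\<in>{1..l}. j \<le> t} = Suc l - j"
    proof -
      have "{t\<in>{1..l}. j \<le> t} = {j..l}" using j by auto
      then show ?thesis by simp
    qed
    have A1: "alpha j \<le> alpha 1 + ((j - 1) choose 2)" using chain j by auto
    have A3: "(j - 1) + (Suc l - j) = l" using j by auto
    have A2: "((j - 1) choose 2) + (\<Sum>i=0..<Suc l - j. i) \<le> (\<Sum>i=0..<(j - 1) + (Suc l - j). i)"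
      unfolding choose2_sum by (rule sum_upto_add)
    have A2': "((j - 1) choose 2) + (\<Sum>i=0..<Suc l - j. i) \<le> (l choose 2)"
      using A2 unfolding A3 choose2_sum .
    have ord2: "order 0 (L m Q) \<le> alpha j + (\<Sum>i=0..<Suc l - j. i)"
      using ordj card unfolding Q_def Lsum by simp
    have "order 0 (L m Q) \<le> alpha 1 + (l choose 2)" using ord2 A1 A2' by linarith
    with l_prop have lt: "order 0 (L m Q) < alpha (l + 1)" by simp
    have "[:0,1:]^(alpha (l+1)) dvd L m R"
      unfolding R_def Lsum
    proof (rule dvd_sum)
      fix j assume j: "j \<in> {l+1..k}"
      have "alpha (l+1) \<le> alpha j" using j l_range by (intro mono) auto
      then have "[:0,1:]^(alpha (l+1)) dvd ([:0,1:]^(alpha j) :: 'a poly)" by (rule le_imp_power_dvd)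
      then have "[:0,1:]^(alpha (l+1)) dvd ([:0,1:]^(alpha j) * [:-r,1:]^(beta j - m) :: 'a poly)"
        by (rule dvd_mult2)
      then show "[:0,1:]^(alpha (l+1)) dvd Polynomial.smult (e m j) ([:0,1:]^(alpha j) * [:-r,1:]^(beta j - m))"
        by (rule dvd_smult)
    qed
    moreover have "L m Q = - L m R" using z Ladd[of m] by (simp add: eq_neg_iff_add_eq_0)
    ultimately have "[:-0,1:]^(alpha (l+1)) dvd L m Q" by simp
    then have "alpha (l+1) \<le> order 0 (L m Q)" using nz order_divides by blast
    with lt show False by simp
  qed
  have iff: "L m (Q + R) \<noteq> 0 \<longleftrightarrow> L m Q \<noteq> 0 \<or> L m R \<noteq> 0" for m
    using key[of m] Ladd[of m] by auto
  have F: "[:[:u:]:] * varX + [:[:v:]:] * varY + [:[:w:]:] = [:[:w,u:], [:v:]:]" by (rule F_eq)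
  show ?thesis
    unfolding F Q_def[symmetric] R_def[symmetric] mult_char[OF v0]
    using least_combine[of "\<lambda>m. L m (Q + R) \<noteq> 0" "\<lambda>m. L m Q \<noteq> 0" "\<lambda>m. L m R \<noteq> 0", OF iff]
    unfolding L_def by simp
qed


end
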